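(* Let $d\geq2$ and $K\geq1$. There is a constant $C=C(d,K)$ (and, where indicated, $C(\delta)$, $C(m)$ also depending on $\delta$, resp. $m$) such that for all $0<\epsilon\leq\frac12$, all $\tilde\xi\in\mathbb R^d$ with $|\tilde\xi|\leq K\epsilon^{-1}$, all $0<t\leq1$ and all $\gamma\in\mathbb R$, writing $B=\{\xi^f\in\mathbb R^d:\ |\xi^f|\leq K\epsilon^{-1}\}$: (i) $\displaystyle\int_B\frac{d\xi^f}{|\gamma+\tilde\xi\cdot\xi^f+\frac it|}\leq C\,\epsilon^{1-d}\min\Big(\frac{1}{|\tilde\xi|},\frac t\epsilon\Big)|\log\epsilon|$ (with $1/|\tilde\xi|=+\infty$ if $\tilde\xi=0$); (ii) for every $0<\delta\leq1$, $\displaystyle\int_B\frac{\mathbf 1\big(|\tilde\xi|\geq\delta\epsilon^{-1}\ \text{or}\ |\gamma+\tilde\xi\cdot\xi^f|\geq\delta\epsilon^{-2}\big)}{|\gamma+\tilde\xi\cdot\xi^f+\frac it|}\,d\xi^f\leq C(\delta)\,\epsilon^{2-d}|\log\epsilon|$; (iii) for every nonnegative $m\in C^1([0,\infty))$ with $m(0)=0$, $\displaystyle\int_B\frac{m(\epsilon|\tilde\xi|)}{|\gamma+\tilde\xi\cdot\xi^f+\frac it|}\,d\xi^f\leq C(m)\,\epsilon^{2-d}|\log\epsilon|$; (iv) $\displaystyle\int_B\frac{d\xi^f}{|\gamma+(\tilde\xi+\xi^f)\cdot\xi^f+\frac it|}\leq C\,\epsilon^{2-d}|\log\epsilon|$.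
   Context: Here $|\cdot|$ of the complex number $\gamma+\dots+\frac it$ is its modulus; $\xi\cdot\eta$ is the Euclidean inner product on $\mathbb R^d$. *)

theory Defs
  imports "HOL-Analysis.Analysis"
begin

definition freqBall :: "real \<Rightarrow> real \<Rightarrow> 'a::euclidean_space set" where
  "freqBall K eps = cball 0 (K / eps)"

definition C1_nonneg_vanishing :: "(real \<Rightarrow> real) \<Rightarrow> bool" where
  "C1_nonneg_vanishing m \<longleftrightarrow>
     (\<forall>x\<ge>0. m x \<ge> 0) \<and> m 0 = 0 \<and>
     (\<exists>m'. (\<forall>x\<ge>0. (m has_real_derivative m' x) (at x within {0..})) \<and> continuous_on {0..} m')"

end

theory Submission
  imports Defs
begin



lemma arsinh_le_ln: "0 \<le> (x::real) \<Longrightarrow> arsinh x \<le> ln (1 + 2*x)"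
proof -
  assume x: "0 \<le> x"
  have "x^2 + 1 \<le> (x+1)^2" using x by (simp add: power2_eq_square algebra_simps)
  then have "sqrt (x^2+1) \<le> x + 1"
    using x by (metis abs_of_nonneg add_nonneg_nonneg real_sqrt_abs real_sqrt_le_mono zero_less_one_class.zero_le_one)
  then have "x + sqrt (x^2+1) \<le> 1 + 2*x" by simp
  then show ?thesis unfolding arsinh_real_def
    using arsinh_real_aux[of x] by simp
qed

lemma sqrt_lip: assumes "0 \<le> p" "p \<le> (q::real)" shows "sqrt (q^2+1) \<le> sqrt (p^2+1) + (q - p)"
proof -
  define s where "s = sqrt (p^2+1)"
  have s0: "s \<ge> p" 
  proof -
    have "sqrt (p^2) \<le> s" unfolding s_def by (rule real_sqrt_le_mono) simp
    then show ?thesis by simp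
  qed
  have ss: "s^2 = p^2 + 1" unfolding s_def by simp
  have "q^2 + 1 \<le> (s + (q-p))^2"
  proof -
    have "(s + (q-p))^2 - (q^2+1) = (q-p)*(2 * s - 2 * p)"
      using ss by (simp add: power2_eq_square algebra_simps)
    also have "\<dots> \<ge> 0" using s0 assms by simp
    finally show ?thesis by simp
  qed
  moreover have "s + (q-p) \<ge> 0" using s0 assms by simp
  ultimately show ?thesis unfolding s_def[symmetric] using real_le_lsqrt by blast
qed

lemma arsinh_diff_pos:
  assumes "0 \<le> p" "p \<le> (q::real)" shows "arsinh q - arsinh p \<le> ln (1 + 2*(q-p))"
proof -
  define P where "P = p + sqrt (p^2+1)"
  define Q where "Q = q + sqrt (q^2+1)"
  have P1: "P \<ge> 1" unfolding P_def using assms by (simp add: add_nonneg_nonneg add_increasing)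
  have "Q \<le> P + 2*(q-p)" unfolding P_def Q_def using sqrt_lip[OF assms] by simp
  also have "\<dots> \<le> P * (1 + 2*(q-p))"
  proof -
    have "1*(2*(q-p)) \<le> P*(2*(q-p))" by (rule mult_right_mono) (use P1 assms in auto)
    then show ?thesis by (simp add: distrib_left)
  qed
  finally have QP: "Q \<le> P * (1 + 2*(q-p))" .
  have Q0: "Q > 0" unfolding Q_def by (rule arsinh_real_aux)
  have "ln Q \<le> ln (P * (1 + 2*(q-p)))" using QP Q0 by simp
  also have "\<dots> = ln P + ln (1 + 2*(q-p))" using P1 assms by (simp add: ln_mult)
  finally show ?thesis unfolding arsinh_real_def P_def Q_def by simp
qed

lemma arsinh_diff:
  assumes "p \<le> (q::real)" shows "arsinh q - arsinh p \<le> 2 * ln (1 + 2*(q-p))"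
proof -
  have l0: "0 \<le> ln (1 + 2*(q-p))" using assms by simp
  consider "0 \<le> p" | "q \<le> 0" | "p < 0" "0 < q" by linarith
  then show ?thesis
  proof cases
    case 1 then show ?thesis using arsinh_diff_pos[OF 1 assms] l0 by linarith
  next
    case 2
    have "arsinh (-p) - arsinh (-q) \<le> ln (1 + 2*(-p - -q))"
      by (rule arsinh_diff_pos) (use 2 assms in auto)
    then show ?thesis using l0 by simp
  next
    case 3
    have "ln (1 + 2*q) \<le> ln (1 + 2*(q-p))" using 3 by simp
    then have a: "arsinh q \<le> ln (1 + 2*(q-p))"
      using arsinh_le_ln[of q] 3 by linarith
    have "ln (1 + 2*(-p)) \<le> ln (1 + 2*(q-p))" using 3 by simp
    then have b: "arsinh (-p) \<le> ln (1 + 2*(q-p))"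
      using arsinh_le_ln[of "-p"] 3 by linarith
    show ?thesis using a b by simp
  qed
qed

lemma int1D:
  fixes c \<beta> R :: real
  assumes b: "\<beta> \<noteq> 0" and R: "R \<ge> 0"
  shows "(\<integral>\<^sup>+ y. ennreal (1 / sqrt ((c + \<beta>*y)^2 + 1)) * indicator {-R..R} y \<partial>lborel)
          \<le> ennreal (2 * ln (1 + 4*R*\<bar>\<beta>\<bar>) / \<bar>\<beta>\<bar>)"
proof -
  define F where "F y = arsinh (c + \<beta>*y) / \<beta>" for y
  have D: "DERIV F y :> 1 / sqrt ((c + \<beta>*y)^2 + 1)" for y
  proof -
    have "((\<lambda>y. arsinh (c+\<beta>*y)) has_real_derivative (1/sqrt((c+\<beta>*y)^2+1)) * \<beta>) (at y)"
      by (rule DERIV_chain2[OF arsinh_real_has_field_derivative]) (auto intro!: derivative_eq_intros)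
    then have "((\<lambda>y. arsinh (c+\<beta>*y) / \<beta>) has_real_derivative (1/sqrt((c+\<beta>*y)^2+1)) * \<beta> / \<beta>) (at y)"
      by (rule DERIV_cdivide)
    then show ?thesis unfolding F_def using b by simp
  qed
  have eq: "(\<integral>\<^sup>+ y. ennreal (1 / sqrt ((c + \<beta>*y)^2 + 1)) * indicator {-R..R} y \<partial>lborel) = F R - F (-R)"
    by (rule nn_integral_FTC_Icc) (use D R in auto)
  have "F R - F (-R) \<le> 2 * ln (1 + 4*R*\<bar>\<beta>\<bar>) / \<bar>\<beta>\<bar>"
  proof (cases "\<beta> > 0")
    case True
    have "arsinh (c + \<beta>*R) - arsinh (c + \<beta>*(-R)) \<le> 2 * ln (1 + 2*((c + \<beta>*R) - (c + \<beta>*(-R))))"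
      by (rule arsinh_diff) (use True R in auto)
    moreover have "F R - F (-R) = (arsinh (c + \<beta>*R) - arsinh (c + \<beta>*(-R))) / \<bar>\<beta>\<bar>"
      unfolding F_def using True by (simp add: diff_divide_distrib)
    moreover have "2*((c + \<beta>*R) - (c + \<beta>*(-R))) = 4*R*\<bar>\<beta>\<bar>" using True by simp
    ultimately show ?thesis using True by (simp add: divide_right_mono mult.assoc)
  next
    case False
    then have bn: "\<beta> < 0" using b by simp
    have "arsinh (c + \<beta>*(-R)) - arsinh (c + \<beta>*R) \<le> 2 * ln (1 + 2*((c + \<beta>*(-R)) - (c + \<beta>*R)))"
      by (rule arsinh_diff) (use bn R in \<open>auto simp: mult_nonpos_nonneg\<close>)
    then have X: "arsinh (c + \<beta>*(-R)) - arsinh (c + \<beta>*R) \<le> 2 * ln (1 + 4*R*\<bar>\<beta>\<bar>)"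
      using bn by (simp add: algebra_simps)
    have E: "F R - F (-R) = (arsinh (c + \<beta>*(-R)) - arsinh (c + \<beta>*R)) / \<bar>\<beta>\<bar>"
      unfolding F_def using bn by (simp add: diff_divide_distrib)
    have "(arsinh (c + \<beta>*(-R)) - arsinh (c + \<beta>*R)) / \<bar>\<beta>\<bar> \<le> 2 * ln (1 + 4*R*\<bar>\<beta>\<bar>) / \<bar>\<beta>\<bar>"
      by (rule divide_right_mono[OF X]) simp
    then show ?thesis unfolding E .
  qed
  then show ?thesis unfolding eq by (rule ennreal_leI)
qed



lemma meas_sq[measurable]: "(\<lambda>p::real\<times>real. fst p ^2 + snd p ^2) \<in> borel_measurable borel"
  by (intro borel_measurable_continuous_onI continuous_intros)

lemma distr_sq:
  "distr (lborel::(real\<times>real) measure) borel (\<lambda>p. fst p ^2 + snd p ^2)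
     = density lborel (\<lambda>u. ennreal pi * indicator {0..} u)" (is "?M = ?N")
proof (rule measure_eqI_generator_eq[where E="range atMost" and \<Omega>=UNIV and A="\<lambda>i. {..real i}"])
  show "Int_stable (range atMost :: real set set)"
    by (auto simp: Int_stable_def)
  show "range atMost \<subseteq> Pow (UNIV :: real set)" by auto
  have sb: "sets (borel :: real measure) = sigma_sets UNIV (range atMost)"
    by (subst borel_eq_atMost) simp
  show "sets ?M = sigma_sets UNIV (range atMost)" using sb by simp
  show "sets ?N = sigma_sets UNIV (range atMost)" using sb by simp
  show "range (\<lambda>i. {..real i}) \<subseteq> range atMost" by auto
  show "(\<Union>i. {..real i}) = UNIV" by (auto intro: real_arch_simple)
  have Mval: "emeasure ?M {..a} = (if a < 0 then 0 else ennreal (pi * a))" for a :: real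
  proof -
    have "emeasure ?M {..a} = emeasure lborel {p::real\<times>real. fst p ^2 + snd p ^2 \<le> a}"
      by (subst emeasure_distr) (auto intro!: arg_cong2[where f=emeasure])
    also have "\<dots> = (if a < 0 then 0 else ennreal (pi * a))"
    proof (cases "a < 0")
      case True
      have "{p::real\<times>real. fst p ^2 + snd p ^2 \<le> a} = {}"
      proof (intro equalityI subsetI)
        fix p :: "real \<times> real" assume "p \<in> {p::real\<times>real. fst p ^2 + snd p ^2 \<le> a}"
        then have "fst p ^2 + snd p ^2 \<le> a" by simp
        moreover have "0 \<le> fst p ^2 + snd p ^2" by simp
        ultimately show "p \<in> {}" using True by linarith
      qed simp
      then show ?thesis using True by simp
    next
      case False
      have "{p::real\<times>real. fst p ^2 + snd p ^2 \<le> a} = cball 0 (sqrt a)"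
        using False by (auto simp: norm_Pair real_le_rsqrt real_sqrt_le_iff intro: real_le_lsqrt)
      moreover have "emeasure lborel (cball (0::real\<times>real) (sqrt a)) = ennreal (pi * a)"
        using False by (subst emeasure_cball) (auto simp: unit_ball_vol_2)
      ultimately show ?thesis using False by simp
    qed
    finally show ?thesis .
  qed
  have eqa: "emeasure ?M {..a} = emeasure ?N {..a}" for a :: real
  proof -
    have "emeasure ?M {..a} = (if a < 0 then 0 else ennreal (pi * a))" by (rule Mval)
    also have "\<dots> = emeasure ?N {..a}"
    proof -
      have "emeasure ?N {..a} = (\<integral>\<^sup>+ u. ennreal pi * indicator {0..} u * indicator {..a} u \<partial>lborel)"
        by (subst emeasure_density) auto
      also have "\<dots> = (\<integral>\<^sup>+ u. ennreal pi * indicator {0..a} u \<partial>lborel)"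
        by (rule nn_integral_cong) (auto split: split_indicator)
      also have "\<dots> = ennreal pi * emeasure lborel {0..a}"
        by (subst nn_integral_cmult_indicator) auto
      also have "\<dots> = (if a < 0 then 0 else ennreal (pi * a))"
        by (auto simp: ennreal_mult)
      finally show ?thesis by simp
    qed
    finally show ?thesis .
  qed
  then show "\<And>X. X \<in> range atMost \<Longrightarrow> emeasure ?M X = emeasure ?N X" by auto
  show "emeasure ?M {..real i} \<noteq> \<infinity>" for i
    using Mval[of "real i"] by simp
qed

lemma radial2:
  fixes h :: "real \<Rightarrow> ennreal"
  assumes [measurable]: "h \<in> borel_measurable borel"
  shows "(\<integral>\<^sup>+ p. h (fst p ^2 + snd p ^2) \<partial>(lborel::(real\<times>real) measure))
           = ennreal pi * (\<integral>\<^sup>+ u. h u * indicator {0..} u \<partial>lborel)"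
proof -
  have "(\<integral>\<^sup>+ p. h (fst p ^2 + snd p ^2) \<partial>(lborel::(real\<times>real) measure))
        = (\<integral>\<^sup>+ u. h u \<partial>distr (lborel::(real\<times>real) measure) borel (\<lambda>p. fst p ^2 + snd p ^2))"
    by (subst nn_integral_distr) auto
  also have "\<dots> = (\<integral>\<^sup>+ u. h u \<partial>density lborel (\<lambda>u. ennreal pi * indicator {0..} u))"
    by (simp only: distr_sq)
  also have "\<dots> = (\<integral>\<^sup>+ u. ennreal pi * (h u * indicator {0..} u) \<partial>lborel)"
    by (subst nn_integral_density) (auto simp: mult_ac)
  also have "\<dots> = ennreal pi * (\<integral>\<^sup>+ u. h u * indicator {0..} u \<partial>lborel)"
    by (rule nn_integral_cmult) auto
  finally show ?thesis .
qed



lemma inner_sum_basis: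
  fixes z :: "'a::euclidean_space \<Rightarrow> real"
  assumes "b \<in> Basis" shows "(\<Sum>b'\<in>Basis. z b' *\<^sub>R b') \<bullet> b = z b"
  using assms by (simp add: inner_sum_left inner_Basis if_distrib sum.If_cases cong: if_cong)

lemma split2:
  fixes f :: "'a::euclidean_space \<Rightarrow> ennreal" and R M :: real
  assumes fm[measurable]: "f \<in> borel_measurable borel"
    and b1: "b1 \<in> Basis" and b2: "b2 \<in> Basis" and ne: "b1 \<noteq> b2" and R: "R \<ge> 0" and M: "M \<ge> 0"
    and bound: "\<And>w. w \<bullet> b1 = 0 \<Longrightarrow> w \<bullet> b2 = 0 \<Longrightarrow>
      (\<integral>\<^sup>+ y2. \<integral>\<^sup>+ y1. f (y1 *\<^sub>R b1 + y2 *\<^sub>R b2 + w) * indicator {-R..R} y1 * indicator {-R..R} y2 \<partial>lborel \<partial>lborel)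
        \<le> ennreal M"
  shows "(\<integral>\<^sup>+ x. f x * indicator (cball 0 R) x \<partial>lborel) \<le> ennreal ((2*R)^(DIM('a) - 2) * M)"
proof -
  interpret product_sigma_finite "\<lambda>_::'a. lborel::real measure" by standard
  define I where "I = Basis - {b1, b2}"
  have BI: "Basis = insert b1 (insert b2 I)" using b1 b2 unfolding I_def by auto
  have fI: "finite I" unfolding I_def by simp
  have nI: "b1 \<notin> insert b2 I" "b2 \<notin> I" using ne unfolding I_def by auto
  have cI: "card I = DIM('a) - 2" unfolding I_def using b1 b2 ne by (simp add: card_Diff_subset)
  define T where "T z = (\<Sum>b\<in>Basis. z b *\<^sub>R b)" for z :: "'a \<Rightarrow> real"
  define F where "F z = f (T z) * (\<Prod>b\<in>Basis. indicator {-R..R} (z b))" for z :: "'a \<Rightarrow> real"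
  have Tm[measurable]: "T \<in> borel_measurable (Pi\<^sub>M Basis (\<lambda>_. lborel))" unfolding T_def by measurable
  have Fm[measurable]: "F \<in> borel_measurable (Pi\<^sub>M Basis (\<lambda>_. lborel))" unfolding F_def by measurable
  have "(\<integral>\<^sup>+ x. f x * indicator (cball 0 R) x \<partial>lborel)
      \<le> (\<integral>\<^sup>+ x. f x * (\<Prod>b\<in>Basis. indicator {-R..R} (x \<bullet> b)) \<partial>lborel)"
  proof (rule nn_integral_mono)
    fix x :: 'a
    show "f x * indicator (cball 0 R) x \<le> f x * (\<Prod>b\<in>Basis. indicator {-R..R} (x \<bullet> b))"
    proof (cases "x \<in> cball 0 R")
      case True
      have "(\<Prod>b\<in>Basis. indicator {-R..R} (x \<bullet> b) :: ennreal) = 1"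
      proof (rule prod.neutral, intro ballI)
        fix b :: 'a assume "b \<in> Basis"
        then have "\<bar>x \<bullet> b\<bar> \<le> norm x" by (rule Basis_le_norm)
        with True show "indicator {-R..R} (x \<bullet> b) = (1::ennreal)" by (auto simp: indicator_def)
      qed
      then show ?thesis using True by simp
    qed simp
  qed
  also have "\<dots> = (\<integral>\<^sup>+ z. F z \<partial>Pi\<^sub>M Basis (\<lambda>_. lborel))"
  proof -
    have "(\<integral>\<^sup>+ x. f x * (\<Prod>b\<in>Basis. indicator {-R..R} (x \<bullet> b)) \<partial>(lborel::'a measure))
       = (\<integral>\<^sup>+ z. f (T z) * (\<Prod>b\<in>Basis. indicator {-R..R} (T z \<bullet> b)) \<partial>Pi\<^sub>M Basis (\<lambda>_. lborel))"
    proof -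
      have L: "(lborel::'a measure) = distr (Pi\<^sub>M Basis (\<lambda>_. lborel)) borel T"
        unfolding T_def by (rule lborel_eq)
      have gm: "(\<lambda>x. f x * (\<Prod>b\<in>Basis. indicator {-R..R} (x \<bullet> b))) \<in> borel_measurable (borel::'a measure)"
        by measurable
      show ?thesis
        by (subst L, rule nn_integral_distr[OF Tm]) (use gm in simp)
    qed
    also have "\<dots> = (\<integral>\<^sup>+ z. F z \<partial>Pi\<^sub>M Basis (\<lambda>_. lborel))"
      unfolding F_def T_def by (intro nn_integral_cong arg_cong2[where f="(*)"] refl prod.cong) (simp add: inner_sum_basis)
    finally show ?thesis .
  qed
  also have "\<dots> = (\<integral>\<^sup>+ z. (\<integral>\<^sup>+ y2. (\<integral>\<^sup>+ y1. F (z(b2 := y2, b1 := y1)) \<partial>lborel) \<partial>lborel) \<partial>Pi\<^sub>M I (\<lambda>_. lborel))"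
  proof -
    have "(\<integral>\<^sup>+ z. F z \<partial>Pi\<^sub>M Basis (\<lambda>_. lborel)) = (\<integral>\<^sup>+ x. (\<integral>\<^sup>+ y1. F (x(b1 := y1)) \<partial>lborel) \<partial>Pi\<^sub>M (insert b2 I) (\<lambda>_. lborel))"
      unfolding BI by (rule product_nn_integral_insert) (use fI nI Fm BI in auto)
    also have "\<dots> = (\<integral>\<^sup>+ z. (\<integral>\<^sup>+ y2. (\<integral>\<^sup>+ y1. F (z(b2 := y2, b1 := y1)) \<partial>lborel) \<partial>lborel) \<partial>Pi\<^sub>M I (\<lambda>_. lborel))"
    proof -
      have cm: "(\<lambda>(x, y1). x(b1 := y1)) \<in> measurable (Pi\<^sub>M (insert b2 I) (\<lambda>_. lborel) \<Otimes>\<^sub>M lborel) (Pi\<^sub>M Basis (\<lambda>_. lborel::real measure))"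
        unfolding BI by (rule measurable_add_dim)
      have "case_prod (\<lambda>x y1. F (x(b1 := y1))) \<in> borel_measurable (Pi\<^sub>M (insert b2 I) (\<lambda>_. lborel) \<Otimes>\<^sub>M lborel)"
        using measurable_comp[OF cm Fm] by (simp add: comp_def case_prod_beta')
      then have Hm: "(\<lambda>x. \<integral>\<^sup>+ y1. F (x(b1 := y1)) \<partial>lborel) \<in> borel_measurable (Pi\<^sub>M (insert b2 I) (\<lambda>_. lborel))"
        by (rule lborel.borel_measurable_nn_integral)
      show ?thesis
        by (rule product_nn_integral_insert[where f="\<lambda>x. \<integral>\<^sup>+ y1. F (x(b1 := y1)) \<partial>lborel" and i=b2 and I=I, OF fI nI(2) Hm])
    qed
    finally show ?thesis .
  qed
  also have "\<dots> \<le> (\<integral>\<^sup>+ z. ennreal M * (\<Prod>b\<in>I. indicator {-R..R} (z b)) \<partial>Pi\<^sub>M I (\<lambda>_. lborel))"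
  proof (rule nn_integral_mono)
    fix z assume z: "z \<in> space (Pi\<^sub>M I (\<lambda>_. lborel::real measure))"
    define w where "w = (\<Sum>b\<in>I. z b *\<^sub>R b)"
    define P where "P = (\<Prod>b\<in>I. indicator {-R..R} (z b) :: ennreal)"
    have w1: "w \<bullet> b1 = 0" and w2: "w \<bullet> b2 = 0"
      unfolding w_def using b1 b2 nI by (auto simp: inner_sum_left inner_Basis I_def intro!: sum.neutral)
    have FF: "F (z(b2 := y2, b1 := y1)) = f (y1 *\<^sub>R b1 + y2 *\<^sub>R b2 + w) * indicator {-R..R} y1 * indicator {-R..R} y2 * P" for y1 y2
    proof -
      have "T (z(b2 := y2, b1 := y1)) = y1 *\<^sub>R b1 + y2 *\<^sub>R b2 + w"
        unfolding T_def w_def BI using fI nI ne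
        by (simp add: add.assoc, intro sum.cong) auto
      moreover have "(\<Prod>b\<in>Basis. indicator {-R..R} ((z(b2 := y2, b1 := y1)) b)) = indicator {-R..R} y1 * indicator {-R..R} y2 * P"
      proof -
        have PP: "(\<Prod>b\<in>I. indicator {-R..R} ((z(b2 := y2, b1 := y1)) b)) = P"
          unfolding P_def by (rule prod.cong) (use nI ne in auto)
        show ?thesis unfolding BI using fI nI ne PP by (simp add: mult.assoc)
      qed
      ultimately show ?thesis unfolding F_def by (simp add: mult_ac)
    qed
    have "(\<integral>\<^sup>+ y2. (\<integral>\<^sup>+ y1. F (z(b2 := y2, b1 := y1)) \<partial>lborel) \<partial>lborel)
        = (\<integral>\<^sup>+ y2. (\<integral>\<^sup>+ y1. f (y1 *\<^sub>R b1 + y2 *\<^sub>R b2 + w) * indicator {-R..R} y1 * indicator {-R..R} y2 \<partial>lborel) * P \<partial>lborel)"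
      unfolding FF by (intro nn_integral_cong nn_integral_multc) auto
    also have "\<dots> = (\<integral>\<^sup>+ y2. (\<integral>\<^sup>+ y1. f (y1 *\<^sub>R b1 + y2 *\<^sub>R b2 + w) * indicator {-R..R} y1 * indicator {-R..R} y2 \<partial>lborel) \<partial>lborel) * P"
      by (rule nn_integral_multc) auto
    also have "\<dots> \<le> ennreal M * P"
      by (rule mult_right_mono[OF bound[OF w1 w2]]) simp
    finally show "(\<integral>\<^sup>+ y2. (\<integral>\<^sup>+ y1. F (z(b2 := y2, b1 := y1)) \<partial>lborel) \<partial>lborel) \<le> ennreal M * (\<Prod>b\<in>I. indicator {-R..R} (z b))"
      unfolding P_def .
  qed
  also have "\<dots> = ennreal M * (\<integral>\<^sup>+ z. (\<Prod>b\<in>I. indicator {-R..R} (z b)) \<partial>Pi\<^sub>M I (\<lambda>_. lborel))"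
    by (rule nn_integral_cmult) (use fI in measurable)
  also have "(\<integral>\<^sup>+ z. (\<Prod>b\<in>I. indicator {-R..R} (z b)) \<partial>Pi\<^sub>M I (\<lambda>_. lborel)) = (\<Prod>b\<in>I. \<integral>\<^sup>+ y. indicator {-R..R} y \<partial>lborel)"
    by (rule product_nn_integral_prod) (use fI in auto)
  also have "\<dots> = ennreal ((2*R)^(DIM('a) - 2))"
    using R cI by (simp add: prod_ennreal[symmetric] ennreal_power)
  finally show ?thesis using M R by (simp add: ennreal_mult mult.commute)
qed



lemma cmod_eq: assumes "0 < t"
  shows "cmod (complex_of_real A + \<i> / complex_of_real t) = sqrt (A^2 + (1/t)^2)"
proof -
  have "complex_of_real A + \<i> / complex_of_real t = Complex A (1/t)"
    by (simp add: complex_eq_iff)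
  then show ?thesis by (simp add: cmod_def)
qed

lemma G_le_t: assumes "0 < t"
  shows "1 / cmod (complex_of_real A + \<i> / complex_of_real t) \<le> t"
proof -
  have "1/t \<le> sqrt (A^2 + (1/t)^2)"
    by (rule real_le_rsqrt) simp
  then have "1 / sqrt (A^2 + (1/t)^2) \<le> 1 / (1/t)"
    using assms by (intro divide_left_mono mult_pos_pos) (auto simp: add_nonneg_pos)
  then show ?thesis unfolding cmod_eq[OF assms] by simp
qed

lemma G_le_sq: assumes "0 < t" "t \<le> 1"
  shows "1 / cmod (complex_of_real A + \<i> / complex_of_real t) \<le> 1 / sqrt (A^2 + 1)"
proof -
  have "1 \<le> 1/t" using assms by simp
  then have "1 \<le> (1/t)^2" by (simp add: one_le_power)
  then have "sqrt (A^2 + 1) \<le> sqrt (A^2 + (1/t)^2)" by simp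
  moreover have "0 < sqrt (A^2 + 1)" by (simp add: add_nonneg_pos)
  moreover have "0 < A^2 + (1/t)^2" using assms by (simp add: add_nonneg_pos)
  ultimately show ?thesis unfolding cmod_eq[OF assms(1)]
    by (intro divide_left_mono mult_pos_pos) auto
qed

lemma G_le_abs: assumes "0 < t" "A \<noteq> 0"
  shows "1 / cmod (complex_of_real A + \<i> / complex_of_real t) \<le> 1 / \<bar>A\<bar>"
proof -
  have "\<bar>A\<bar> \<le> sqrt (A^2 + (1/t)^2)" by (rule real_le_rsqrt) simp
  moreover have "0 < sqrt (A^2 + (1/t)^2)" using assms by (simp add: add_nonneg_pos)
  ultimately show ?thesis unfolding cmod_eq[OF assms(1)] by (intro divide_left_mono mult_pos_pos) (use assms in auto)
qed



lemma log_bound: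
  fixes eps A :: real
  assumes e: "0 < eps" "eps \<le> 1/2" and A: "A \<ge> 0"
  shows "ln (1 + A / eps^2) \<le> (ln (1 + A) / ln 2 + 2) * \<bar>ln eps\<bar>"
proof -
  have e2: "eps^2 \<le> 1" using e by (simp add: power_le_one)
  have "1 + A / eps^2 \<le> (1 + A) / eps^2"
    using e e2 A by (simp add: field_simps)
  then have "ln (1 + A / eps^2) \<le> ln ((1 + A) / eps^2)"
    using e A by (intro ln_mono) (auto simp: add_pos_nonneg)
  also have "\<dots> = ln (1 + A) - 2 * ln eps"
    using e A by (simp add: ln_div ln_realpow)
  also have "\<dots> = ln (1 + A) + 2 * \<bar>ln eps\<bar>"
  proof -
    have "ln eps < 0" using e by (intro ln_less_zero) auto
    then show ?thesis by simp
  qed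
  finally have L1: "ln (1 + A / eps^2) \<le> ln (1 + A) + 2 * \<bar>ln eps\<bar>" .
  have L2: "ln (1 + A) \<le> ln (1 + A) / ln 2 * \<bar>ln eps\<bar>"
  proof -
    have "2 \<le> 1/eps" using e by (simp add: field_simps)
    then have "ln 2 \<le> ln (1/eps)" using e by (subst ln_le_cancel_iff) auto
    then have "ln 2 \<le> - ln eps" using e by (simp add: ln_div)
    then have "1 \<le> (- ln eps) / ln 2" by (subst pos_le_divide_eq) auto
    moreover have abseq: "\<bar>ln eps\<bar> = - ln eps" using e by (intro abs_of_neg ln_less_zero) auto
    ultimately have "1 \<le> \<bar>ln eps\<bar> / ln 2" by (simp only: abseq)
    moreover have "0 \<le> ln (1 + A)" using A by simp
    ultimately have "ln (1 + A) * 1 \<le> ln (1 + A) * (\<bar>ln eps\<bar> / ln 2)" by (rule mult_left_mono)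
    then show ?thesis by simp
  qed
  have "(ln (1 + A) / ln 2 + 2) * \<bar>ln eps\<bar> = ln (1 + A) / ln 2 * \<bar>ln eps\<bar> + 2 * \<bar>ln eps\<bar>"
    by (rule distrib_right)
  then show ?thesis using L1 L2 by linarith
qed




lemma exists_big_coord:
  fixes \<xi> :: "'a::euclidean_space"
  obtains b where "b \<in> Basis" "norm \<xi> \<le> real DIM('a) * \<bar>\<xi> \<bullet> b\<bar>"
proof -
  define m where "m = Max ((\<lambda>b. \<bar>\<xi> \<bullet> b\<bar>) ` Basis)"
  have "m \<in> (\<lambda>b. \<bar>\<xi> \<bullet> b\<bar>) ` Basis" unfolding m_def by (rule Max_in) auto
  then obtain b where b: "b \<in> Basis" "m = \<bar>\<xi> \<bullet> b\<bar>" by auto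
  have "norm \<xi> \<le> (\<Sum>i\<in>Basis. \<bar>\<xi> \<bullet> i\<bar>)" by (rule norm_le_l1)
  also have "\<dots> \<le> of_nat (card (Basis::'a set)) * m"
    by (rule sum_bounded_above) (auto simp: m_def)
  finally show ?thesis using b that by simp
qed

lemma exists_other:
  assumes "DIM('a::euclidean_space) \<ge> 2" "(b1::'a) \<in> Basis"
  obtains b2 where "b2 \<in> Basis" "b2 \<noteq> b1"
proof -
  have "card (Basis - {b1}) \<ge> 1" using assms by (simp add: card_Diff_singleton)
  then have "Basis - {b1} \<noteq> {}" by (metis card.empty not_one_le_zero)
  then show ?thesis using that by blast
qed

lemma core_dir:
  fixes \<xi> :: "'a::euclidean_space" and R t \<gamma> :: real
  assumes dim: "DIM('a) \<ge> 2" and xi: "\<xi> \<noteq> 0" and R: "R > 0" and nx: "norm \<xi> \<le> R"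
    and t: "0 < t" "t \<le> 1"
  shows "(\<integral>\<^sup>+ x. ennreal (1 / cmod (complex_of_real (\<gamma> + \<xi> \<bullet> x) + \<i> / complex_of_real t)) * indicator (cball 0 R) x \<partial>lborel)
     \<le> ennreal ((2*R)^(DIM('a) - 2) * (4 * R * ln (1 + 4*R*R) * real DIM('a) / norm \<xi>))"
proof -
  obtain b1 where b1: "b1 \<in> Basis" "norm \<xi> \<le> real DIM('a) * \<bar>\<xi> \<bullet> b1\<bar>" by (rule exists_big_coord)
  obtain b2 where b2: "b2 \<in> Basis" "b2 \<noteq> b1" using exists_other[OF dim b1(1)] by blast
  define \<beta> where "\<beta> = \<xi> \<bullet> b1"
  have nxp: "norm \<xi> > 0" using xi by simp
  have dpos: "real DIM('a) > 0" by simp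
  have bpos: "\<bar>\<beta>\<bar> > 0" using b1(2) nxp unfolding \<beta>_def
    by (metis abs_not_less_zero mult_eq_0_iff not_le order_le_less zero_le_mult_iff)
  have bne: "\<beta> \<noteq> 0" using bpos by simp
  have ble: "\<bar>\<beta>\<bar> \<le> R" unfolding \<beta>_def using Basis_le_norm[OF b1(1), of \<xi>] nx by simp
  define f where "f x = ennreal (1 / sqrt ((\<gamma> + \<xi> \<bullet> x)^2 + 1))" for x :: 'a
  have fm: "f \<in> borel_measurable borel" unfolding f_def by measurable
  define B where "B = 2 * ln (1 + 4*R*\<bar>\<beta>\<bar>) / \<bar>\<beta>\<bar>"
  have B0: "B \<ge> 0" unfolding B_def using bpos R by simp
  have "(\<integral>\<^sup>+ x. ennreal (1 / cmod (complex_of_real (\<gamma> + \<xi> \<bullet> x) + \<i> / complex_of_real t)) * indicator (cball 0 R) x \<partial>lborel)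
      \<le> (\<integral>\<^sup>+ x. f x * indicator (cball 0 R) x \<partial>lborel)"
    unfolding f_def
    by (intro nn_integral_mono mult_right_mono ennreal_leI G_le_sq t) simp
  also have "\<dots> \<le> ennreal ((2*R)^(DIM('a) - 2) * (2*R*B))"
  proof (rule split2[OF fm b1(1) b2(1) b2(2)[symmetric]])
    show "0 \<le> R" using R by simp
    show "0 \<le> 2*R*B" using R B0 by simp
    fix w :: 'a assume w1: "w \<bullet> b1 = 0" and w2: "w \<bullet> b2 = 0"
    have "(\<integral>\<^sup>+ y2. \<integral>\<^sup>+ y1. f (y1 *\<^sub>R b1 + y2 *\<^sub>R b2 + w) * indicator {-R..R} y1 * indicator {-R..R} y2 \<partial>lborel \<partial>lborel)
       \<le> (\<integral>\<^sup>+ y2. ennreal B * indicator {-R..R} y2 \<partial>lborel)"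
    proof (rule nn_integral_mono)
      fix y2 :: real
      define c where "c = \<gamma> + y2 * (\<xi> \<bullet> b2) + \<xi> \<bullet> w"
      have fe: "f (y1 *\<^sub>R b1 + y2 *\<^sub>R b2 + w) = ennreal (1 / sqrt ((c + \<beta>*y1)^2 + 1))" for y1
        unfolding f_def c_def \<beta>_def by (simp add: inner_add_right algebra_simps)
      have "(\<integral>\<^sup>+ y1. f (y1 *\<^sub>R b1 + y2 *\<^sub>R b2 + w) * indicator {-R..R} y1 * indicator {-R..R} y2 \<partial>lborel)
          = (\<integral>\<^sup>+ y1. ennreal (1 / sqrt ((c + \<beta>*y1)^2 + 1)) * indicator {-R..R} y1 \<partial>lborel) * indicator {-R..R} y2"
        unfolding fe by (rule nn_integral_multc) measurable
      also have "\<dots> \<le> ennreal B * indicator {-R..R} y2"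
        unfolding B_def by (rule mult_right_mono[OF int1D[OF bne]]) (use R in auto)
      finally show "(\<integral>\<^sup>+ y1. f (y1 *\<^sub>R b1 + y2 *\<^sub>R b2 + w) * indicator {-R..R} y1 * indicator {-R..R} y2 \<partial>lborel)
          \<le> ennreal B * indicator {-R..R} y2" .
    qed
    also have "\<dots> = ennreal B * ennreal (2*R)"
      using R by (subst nn_integral_cmult_indicator) auto
    also have "\<dots> = ennreal (2*R*B)" using R B0 by (simp add: ennreal_mult[symmetric] mult_ac)
    finally show "(\<integral>\<^sup>+ y2. \<integral>\<^sup>+ y1. f (y1 *\<^sub>R b1 + y2 *\<^sub>R b2 + w) * indicator {-R..R} y1 * indicator {-R..R} y2 \<partial>lborel \<partial>lborel)
       \<le> ennreal (2*R*B)" .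
  qed
  also have "\<dots> \<le> ennreal ((2*R)^(DIM('a) - 2) * (4 * R * ln (1 + 4*R*R) * real DIM('a) / norm \<xi>))"
  proof (rule ennreal_leI, rule mult_left_mono)
    have "4*R*\<bar>\<beta>\<bar> \<le> 4*R*R" using R ble by (intro mult_left_mono) auto
    then have l1: "ln (1 + 4*R*\<bar>\<beta>\<bar>) \<le> ln (1 + 4*R*R)"
      by (rule ln_mono[OF add_left_mono]) (use R in \<open>simp add: add_pos_nonneg\<close>)
    have l2: "1 / \<bar>\<beta>\<bar> \<le> real DIM('a) / norm \<xi>"
      using b1(2) bpos nxp unfolding \<beta>_def by (simp add: field_simps)
    have "2*R*B = 4*R * (ln (1 + 4*R*\<bar>\<beta>\<bar>) * (1 / \<bar>\<beta>\<bar>))" unfolding B_def by simp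
    also have "\<dots> \<le> 4*R * (ln (1 + 4*R*R) * (real DIM('a) / norm \<xi>))"
      using R bpos by (intro mult_left_mono mult_mono l1 l2) (auto simp: add_pos_nonneg)
    finally show "2*R*B \<le> 4 * R * ln (1 + 4*R*R) * real DIM('a) / norm \<xi>" by simp
  qed (use R in simp)
  finally show ?thesis .
qed



lemma sq_bound: fixes y p R :: real
  assumes "\<bar>y\<bar> \<le> R" "\<bar>p\<bar> \<le> R/2" shows "(y+p)^2 \<le> 9/4*R^2"
proof -
  have "\<bar>y+p\<bar> \<le> 3/2*R" using assms by linarith
  then have "\<bar>y+p\<bar>^2 \<le> (3/2*R)^2" by (rule power_mono) simp
  moreover have "(3/2*R)^2 = 9/4*R^2" by (simp add: power2_eq_square)
  ultimately show ?thesis by simp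
qed

lemma core_quad:
  fixes \<xi> :: "'a::euclidean_space" and R t \<gamma> :: real
  assumes dim: "DIM('a) \<ge> 2" and R: "R > 0" and nx: "norm \<xi> \<le> R"
    and t: "0 < t" "t \<le> 1"
  shows "(\<integral>\<^sup>+ x. ennreal (1 / cmod (complex_of_real (\<gamma> + (\<xi> + x) \<bullet> x) + \<i> / complex_of_real t)) * indicator (cball 0 R) x \<partial>lborel)
     \<le> ennreal ((2*R)^(DIM('a) - 2) * (pi * (2 * ln (1 + 20*R*R))))"
proof -
  obtain b1 :: 'a where b1: "b1 \<in> Basis" using nonempty_Basis by blast
  obtain b2 where b2: "b2 \<in> Basis" "b2 \<noteq> b1" using exists_other[OF dim b1] by blast
  define f where "f x = ennreal (1 / sqrt ((\<gamma> + (\<xi> + x) \<bullet> x)^2 + 1))" for x :: 'a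
  have fm: "f \<in> borel_measurable borel" unfolding f_def by measurable
  define M where "M = pi * (2 * ln (1 + 20*R*R))"
  have M0: "M \<ge> 0" unfolding M_def using R by simp
  have "(\<integral>\<^sup>+ x. ennreal (1 / cmod (complex_of_real (\<gamma> + (\<xi> + x) \<bullet> x) + \<i> / complex_of_real t)) * indicator (cball 0 R) x \<partial>lborel)
      \<le> (\<integral>\<^sup>+ x. f x * indicator (cball 0 R) x \<partial>lborel)"
    unfolding f_def
    by (intro nn_integral_mono mult_right_mono ennreal_leI G_le_sq t) simp
  also have "\<dots> \<le> ennreal ((2*R)^(DIM('a) - 2) * M)"
  proof (rule split2[OF fm b1 b2(1) b2(2)[symmetric]])
    show "0 \<le> R" using R by simp
    show "0 \<le> M" by (rule M0)
    fix w :: 'a assume w1: "w \<bullet> b1 = 0" and w2: "w \<bullet> b2 = 0"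
    define p1 where "p1 = (\<xi> \<bullet> b1) / 2"
    define p2 where "p2 = (\<xi> \<bullet> b2) / 2"
    define c where "c = \<gamma> + \<xi> \<bullet> w + w \<bullet> w - p1^2 - p2^2"
    define R' where "R' = 5*R*R"
    define H where "H u = ennreal (1 / sqrt ((c + 1*u)^2 + 1)) * indicator {-R'..R'} u" for u
    have Hm[measurable]: "H \<in> borel_measurable borel" unfolding H_def by measurable
    have p1b: "\<bar>p1\<bar> \<le> R/2" unfolding p1_def using Basis_le_norm[OF b1, of \<xi>] nx by simp
    have p2b: "\<bar>p2\<bar> \<le> R/2" unfolding p2_def using Basis_le_norm[OF b2(1), of \<xi>] nx by simp
    have quad: "\<gamma> + (\<xi> + (y1 *\<^sub>R b1 + y2 *\<^sub>R b2 + w)) \<bullet> (y1 *\<^sub>R b1 + y2 *\<^sub>R b2 + w)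
        = c + ((y1 + p1)^2 + (y2 + p2)^2)" for y1 y2
    proof -
      have b12: "b1 \<bullet> b2 = 0" "b2 \<bullet> b1 = 0" using b1 b2 by (auto simp: inner_Basis)
      have b11: "b1 \<bullet> b1 = 1" "b2 \<bullet> b2 = 1" using b1 b2 by auto
      have wc: "b1 \<bullet> w = 0" "b2 \<bullet> w = 0" using w1 w2 by (auto simp: inner_commute)
      show ?thesis unfolding c_def p1_def p2_def
        by (simp add: inner_add_left inner_add_right b12 b11 w1 w2 wc power2_eq_square algebra_simps)
    qed
    have pw: "f (y1 *\<^sub>R b1 + y2 *\<^sub>R b2 + w) * indicator {-R..R} y1 * indicator {-R..R} y2
        \<le> H ((y1 + p1)^2 + (y2 + p2)^2)" for y1 y2
    proof (cases "y1 \<in> {-R..R} \<and> y2 \<in> {-R..R}")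
      case True
      then have "\<bar>y1\<bar> \<le> R" "\<bar>y2\<bar> \<le> R" by auto
      then have "(y1 + p1)^2 \<le> 9/4*R^2" "(y2 + p2)^2 \<le> 9/4*R^2"
        using sq_bound p1b p2b by auto
      moreover have "R^2 = R*R" by (simp add: power2_eq_square)
      moreover have "0 \<le> R*R" by simp
      moreover have "0 \<le> (y1 + p1)^2 + (y2 + p2)^2" by simp
      ultimately have "(y1 + p1)^2 + (y2 + p2)^2 \<in> {-R'..R'}" unfolding R'_def atLeastAtMost_iff mult.assoc
        by linarith
      then show ?thesis using True unfolding H_def f_def quad by simp
    qed (auto simp: indicator_def)
    define g where "g q = H ((snd q)^2 + (fst q)^2)" for q :: "real \<times> real"
    have sqm: "(\<lambda>q::real\<times>real. (snd q)^2 + (fst q)^2) \<in> borel_measurable borel"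
      by (intro borel_measurable_continuous_onI continuous_intros)
    have gm[measurable]: "g \<in> borel_measurable borel"
    proof -
      have gg: "g = (\<lambda>q. H ((snd q)^2 + (fst q)^2))" unfolding g_def by (rule ext) simp
      show ?thesis unfolding gg using measurable_comp[OF sqm Hm] by (simp add: comp_def)
    qed
    have "(\<integral>\<^sup>+ y2. \<integral>\<^sup>+ y1. f (y1 *\<^sub>R b1 + y2 *\<^sub>R b2 + w) * indicator {-R..R} y1 * indicator {-R..R} y2 \<partial>lborel \<partial>lborel)
       \<le> (\<integral>\<^sup>+ y2. \<integral>\<^sup>+ y1. g ((p2, p1) + (y2, y1)) \<partial>lborel \<partial>lborel)"
    proof (intro nn_integral_mono)
      fix y1 y2 :: real
      have "g ((p2, p1) + (y2, y1)) = H ((y1 + p1)^2 + (y2 + p2)^2)"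
        unfolding g_def by (simp add: add.commute)
      then show "f (y1 *\<^sub>R b1 + y2 *\<^sub>R b2 + w) * indicator {-R..R} y1 * indicator {-R..R} y2 \<le> g ((p2, p1) + (y2, y1))"
        using pw[of y1 y2] by simp
    qed
    also have "\<dots> = (\<integral>\<^sup>+ q. g ((p2, p1) + q) \<partial>(lborel \<Otimes>\<^sub>M lborel))"
    proof -
      have m0: "(\<lambda>q. g ((p2, p1) + q)) \<in> borel_measurable (borel::(real\<times>real) measure)"
        by measurable
      have m: "(\<lambda>q. g ((p2, p1) + q)) \<in> borel_measurable (lborel \<Otimes>\<^sub>M (lborel::real measure))"
        using m0 by (simp add: lborel_prod)
      show ?thesis by (rule lborel.nn_integral_fst[OF m])
    qed
    also have "\<dots> = (\<integral>\<^sup>+ q. g ((p2, p1) + q) \<partial>lborel)" by (simp only: lborel_prod)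
    also have "\<dots> = (\<integral>\<^sup>+ q. g q \<partial>distr lborel borel ((+) (p2, p1)))"
      by (subst nn_integral_distr) auto
    also have "\<dots> = (\<integral>\<^sup>+ q. g q \<partial>lborel)" by (simp only: lborel_distr_plus)
    also have "\<dots> = (\<integral>\<^sup>+ q. H ((fst q)^2 + (snd q)^2) \<partial>lborel)" unfolding g_def by (simp add: add.commute)
    also have "\<dots> = ennreal pi * (\<integral>\<^sup>+ u. H u * indicator {0..} u \<partial>lborel)" by (rule radial2[OF Hm])
    also have "\<dots> \<le> ennreal pi * (\<integral>\<^sup>+ u. H u \<partial>lborel)"
      by (intro mult_left_mono nn_integral_mono) (auto simp: indicator_def)
    also have "\<dots> \<le> ennreal pi * ennreal (2 * ln (1 + 4*R'*\<bar>1\<bar>) / \<bar>1\<bar>)"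
      unfolding H_def by (intro mult_left_mono int1D) (use R in \<open>auto simp: R'_def\<close>)
    also have "\<dots> = ennreal M" unfolding M_def R'_def using R by (simp add: ennreal_mult[symmetric] mult_ac)
    finally show "(\<integral>\<^sup>+ y2. \<integral>\<^sup>+ y1. f (y1 *\<^sub>R b1 + y2 *\<^sub>R b2 + w) * indicator {-R..R} y1 * indicator {-R..R} y2 \<partial>lborel \<partial>lborel)
       \<le> ennreal M" .
  qed
  finally show ?thesis unfolding M_def .
qed



lemma powr_conv1: assumes "0 < (eps::real)" "1 \<le> d"
  shows "eps powr (1 - real d) = (1/eps)^(d-1)"
proof -
  have h: "1 - real d = - real (d-1)" using assms by (simp add: of_nat_diff)
  have "eps powr (1 - real d) = eps powr (- real (d-1))" by (simp only: h)
  also have "\<dots> = inverse (eps powr real (d-1))" by (rule powr_minus)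
  also have "\<dots> = inverse (eps^(d-1))" by (simp only: powr_realpow[OF assms(1)])
  also have "\<dots> = (1/eps)^(d-1)" by (simp add: power_one_over inverse_eq_divide)
  finally show ?thesis .
qed

lemma powr_conv2: assumes "0 < (eps::real)" "2 \<le> d"
  shows "eps powr (2 - real d) = (1/eps)^(d-2)"
proof -
  have h: "2 - real d = - real (d-2)" using assms by (simp add: of_nat_diff)
  have "eps powr (2 - real d) = eps powr (- real (d-2))" by (simp only: h)
  also have "\<dots> = inverse (eps powr real (d-2))" by (rule powr_minus)
  also have "\<dots> = inverse (eps^(d-2))" by (simp only: powr_realpow[OF assms(1)])
  also have "\<dots> = (1/eps)^(d-2)" by (simp add: power_one_over inverse_eq_divide)
  finally show ?thesis .
qed

lemma partA:
  fixes g :: "'a::euclidean_space \<Rightarrow> real"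
  assumes e: "0 < eps" and K: "0 < K" and c: "\<And>x. g x \<le> c" "0 \<le> c"
  shows "(\<integral>\<^sup>+ x \<in> freqBall K eps. ennreal (g x) \<partial>lborel) \<le> ennreal (c * unit_ball_vol (DIM('a)) * (K/eps)^DIM('a))"
proof -
  have "(\<integral>\<^sup>+ x \<in> freqBall K eps. ennreal (g x) \<partial>lborel) \<le> (\<integral>\<^sup>+ x. ennreal c * indicator (cball (0::'a) (K/eps)) x \<partial>lborel)"
    unfolding freqBall_def by (intro nn_integral_mono mult_right_mono ennreal_leI c) simp
  also have "\<dots> = ennreal c * emeasure lborel (cball (0::'a) (K/eps))"
    by (rule nn_integral_cmult_indicator) simp
  also have "\<dots> = ennreal (c * unit_ball_vol (DIM('a)) * (K/eps)^DIM('a))"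
    using e K c by (subst emeasure_cball) (auto simp: ennreal_mult[symmetric] mult.assoc)
  finally show ?thesis .
qed

definition Lc :: "real \<Rightarrow> real" where "Lc A = ln (1 + A) / ln 2 + 2"

lemma Lc_nonneg: "0 \<le> A \<Longrightarrow> 0 \<le> Lc A" unfolding Lc_def by simp

definition Cb :: "real \<Rightarrow> nat \<Rightarrow> real" where
  "Cb K d = 2^(d-2) * 4 * real d * K^(d-1) * Lc (4*K^2)"

lemma partB:
  fixes \<xi> :: "'a::euclidean_space"
  assumes dim: "DIM('a) \<ge> 2" and K: "K \<ge> 1" and e: "0 < eps" "eps \<le> 1/2"
    and xi: "\<xi> \<noteq> 0" "norm \<xi> \<le> K/eps" and t: "0 < t" "t \<le> 1"
  shows "(\<integral>\<^sup>+ x \<in> freqBall K eps. ennreal (1 / cmod (complex_of_real (\<gamma> + \<xi> \<bullet> x) + \<i> / complex_of_real t)) \<partial>lborel)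
     \<le> ennreal (Cb K DIM('a) * (1/eps)^(DIM('a)-1) / norm \<xi> * \<bar>ln eps\<bar>)"
proof -
  define d where "d = DIM('a)"
  define R where "R = K/eps"
  have R: "R > 0" unfolding R_def using K e by simp
  have "(\<integral>\<^sup>+ x \<in> freqBall K eps. ennreal (1 / cmod (complex_of_real (\<gamma> + \<xi> \<bullet> x) + \<i> / complex_of_real t)) \<partial>lborel)
     \<le> ennreal ((2*R)^(d - 2) * (4 * R * ln (1 + 4*R*R) * real d / norm \<xi>))"
    unfolding freqBall_def R_def d_def by (rule core_dir[OF dim xi(1) _ xi(2) t]) (use K e in simp)
  also have "\<dots> \<le> ennreal (Cb K d * (1/eps)^(d-1) / norm \<xi> * \<bar>ln eps\<bar>)"
  proof (rule ennreal_leI)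
    have nx: "norm \<xi> > 0" using xi by simp
    have lb: "ln (1 + 4*R*R) \<le> Lc (4*K^2) * \<bar>ln eps\<bar>"
    proof -
      have "4*R*R = 4*K^2 / eps^2" unfolding R_def by (simp add: power2_eq_square)
      then show ?thesis unfolding Lc_def using log_bound[OF e, of "4*K^2"] by simp
    qed
    have pw: "(2*R)^(d-2) * R = 2^(d-2) * K^(d-1) * (1/eps)^(d-1)"
    proof -
      have "(2*R)^(d-2) * R = 2^(d-2) * R^(d-2+1)" by (simp add: power_mult_distrib)
      also have "d-2+1 = d-1" using dim unfolding d_def by simp
      finally show ?thesis unfolding R_def by (simp add: power_divide power_one_over field_simps)
    qed
    have "(2*R)^(d - 2) * (4 * R * ln (1 + 4*R*R) * real d / norm \<xi>)
        = ((2*R)^(d-2) * R) * (4 * real d / norm \<xi>) * ln (1 + 4*R*R)" by (simp add: field_simps)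
    also have "\<dots> \<le> ((2*R)^(d-2) * R) * (4 * real d / norm \<xi>) * (Lc (4*K^2) * \<bar>ln eps\<bar>)"
      by (rule mult_left_mono[OF lb]) (use R nx in simp)
    also have "\<dots> = Cb K d * (1/eps)^(d-1) / norm \<xi> * \<bar>ln eps\<bar>"
      unfolding pw Cb_def by (simp add: field_simps)
    finally show "(2*R)^(d - 2) * (4 * R * ln (1 + 4*R*R) * real d / norm \<xi>) \<le> Cb K d * (1/eps)^(d-1) / norm \<xi> * \<bar>ln eps\<bar>" .
  qed
  finally show ?thesis unfolding d_def .
qed

definition C4 :: "real \<Rightarrow> nat \<Rightarrow> real" where
  "C4 K d = 2^(d-2) * K^(d-2) * pi * 2 * Lc (20*K^2)"

lemma partQ:
  fixes \<xi> :: "'a::euclidean_space"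
  assumes dim: "DIM('a) \<ge> 2" and K: "K \<ge> 1" and e: "0 < eps" "eps \<le> 1/2"
    and xi: "norm \<xi> \<le> K/eps" and t: "0 < t" "t \<le> 1"
  shows "(\<integral>\<^sup>+ x \<in> freqBall K eps. ennreal (1 / cmod (complex_of_real (\<gamma> + (\<xi> + x) \<bullet> x) + \<i> / complex_of_real t)) \<partial>lborel)
     \<le> ennreal (C4 K DIM('a) * (1/eps)^(DIM('a)-2) * \<bar>ln eps\<bar>)"
proof -
  define d where "d = DIM('a)"
  define R where "R = K/eps"
  have R: "R > 0" unfolding R_def using K e by simp
  have "(\<integral>\<^sup>+ x \<in> freqBall K eps. ennreal (1 / cmod (complex_of_real (\<gamma> + (\<xi> + x) \<bullet> x) + \<i> / complex_of_real t)) \<partial>lborel)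
     \<le> ennreal ((2*R)^(d - 2) * (pi * (2 * ln (1 + 20*R*R))))"
    unfolding freqBall_def R_def d_def by (rule core_quad[OF dim _ xi t]) (use K e in simp)
  also have "\<dots> \<le> ennreal (C4 K d * (1/eps)^(d-2) * \<bar>ln eps\<bar>)"
  proof (rule ennreal_leI)
    have lb: "ln (1 + 20*R*R) \<le> Lc (20*K^2) * \<bar>ln eps\<bar>"
    proof -
      have "20*R*R = 20*K^2 / eps^2" unfolding R_def by (simp add: power2_eq_square)
      then show ?thesis unfolding Lc_def using log_bound[OF e, of "20*K^2"] by simp
    qed
    have pw: "(2*R)^(d-2) = 2^(d-2) * K^(d-2) * (1/eps)^(d-2)"
      unfolding R_def by (simp add: power_mult_distrib power_divide power_one_over field_simps)
    have "(2*R)^(d - 2) * (pi * (2 * ln (1 + 20*R*R))) = ((2*R)^(d-2) * pi * 2) * ln (1 + 20*R*R)"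
      by (simp add: field_simps)
    also have "\<dots> \<le> ((2*R)^(d-2) * pi * 2) * (Lc (20*K^2) * \<bar>ln eps\<bar>)"
      by (rule mult_left_mono[OF lb]) (use R in simp)
    also have "\<dots> = C4 K d * (1/eps)^(d-2) * \<bar>ln eps\<bar>"
      unfolding pw C4_def by (simp add: field_simps)
    finally show "(2*R)^(d - 2) * (pi * (2 * ln (1 + 20*R*R))) \<le> C4 K d * (1/eps)^(d-2) * \<bar>ln eps\<bar>" .
  qed
  finally show ?thesis unfolding d_def .
qed

lemma m_lip:
  assumes m: "C1_nonneg_vanishing m" and K: "0 \<le> K"
  obtains L where "L \<ge> 0" "\<And>s. 0 \<le> s \<Longrightarrow> s \<le> K \<Longrightarrow> m s \<le> L * s"
proof -
  from m obtain m' where m0: "m 0 = 0"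
    and der: "\<And>x. x \<ge> 0 \<Longrightarrow> (m has_real_derivative m' x) (at x within {0..})"
    and cont: "continuous_on {0..} m'"
    unfolding C1_nonneg_vanishing_def by blast
  have "compact (m' ` {0..K})"
    by (rule compact_continuous_image[OF continuous_on_subset[OF cont]]) auto
  then have "bounded (m' ` {0..K})" by (rule compact_imp_bounded)
  then obtain a where a: "\<And>x. x \<in> {0..K} \<Longrightarrow> norm (m' x) \<le> a" unfolding bounded_iff by blast
  define L where "L = max a 0"
  have "m s \<le> L * s" if s: "0 \<le> s" "s \<le> K" for s
  proof -
    have "norm (m s - m 0) \<le> L * norm (s - 0)"
    proof (rule field_differentiable_bound[where S="{0..K}" and f'=m'])
      show "convex {0..K}" by simp
      fix z assume z: "z \<in> {0..K}"
      show "(m has_field_derivative m' z) (at z within {0..K})"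
        by (rule DERIV_subset[OF der]) (use z in auto)
      show "norm (m' z) \<le> L" using a[OF z] unfolding L_def by simp
    qed (use s in auto)
    then show ?thesis using m0 s by simp
  qed
  moreover have "L \<ge> 0" unfolding L_def by simp
  ultimately show ?thesis using that by blast
qed



lemma ln2_le: assumes "0 < (eps::real)" "eps \<le> 1/2" shows "ln 2 \<le> \<bar>ln eps\<bar>"
proof -
  have "2 \<le> 1/eps" using assms by (simp add: field_simps)
  then have "ln 2 \<le> ln (1/eps)" using assms by (subst ln_le_cancel_iff) auto
  then have "ln 2 \<le> - ln eps" using assms by (simp add: ln_div)
  then show ?thesis by linarith
qed

lemma pow_split1: fixes eps K :: real assumes "1 \<le> d" "0 < eps" shows "(K/eps)^d = K^d * (1/eps)^(d-1) * (1/eps)"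
proof -
  have dd: "d = Suc (d-1)" using assms by simp
  have h: "(1/eps)^(Suc (d-1)) = (1/eps)^(d-1) * (1/eps)" by (rule power_Suc2)
  then have "(1/eps)^(d-1) * (1/eps) = (1/eps)^d" by (simp only: dd[symmetric])
  then show ?thesis by (simp add: power_divide power_one_over field_simps)
qed

lemma pow_split2: fixes eps :: real assumes "2 \<le> d" "0 < eps" shows "(1/eps)^(d-1) * eps = (1/eps)^(d-2)"
proof -
  have dd: "d - 1 = Suc (d-2)" using assms by simp
  have h: "(1/eps)^(Suc (d-2)) = (1/eps)^(d-2) * (1/eps)" by (rule power_Suc2)
  then have "(1/eps)^(d-1) = (1/eps)^(d-2) * (1/eps)" by (simp only: dd)
  then show ?thesis using assms by simp
qed

lemma part_i:
  fixes K :: real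
  assumes dim: "DIM('a::euclidean_space) \<ge> 2" and K: "K \<ge> 1"
  shows
  "\<exists>C::real. \<forall>eps (\<xi>t::'a) t \<gamma>.
      0 < eps \<and> eps \<le> 1/2 \<and> norm \<xi>t \<le> K / eps \<and> 0 < t \<and> t \<le> 1 \<longrightarrow>
      (\<integral>\<^sup>+ x \<in> freqBall K eps.
          ennreal (1 / cmod (complex_of_real (\<gamma> + \<xi>t \<bullet> x) + \<i> / complex_of_real t)) \<partial>lborel)
        \<le> ennreal (C * eps powr (1 - real DIM('a))
             * (if \<xi>t = 0 then t / eps else min (1 / norm \<xi>t) (t / eps)) * \<bar>ln eps\<bar>)"
proof -
  define d where "d = DIM('a)"
  define V where "V = unit_ball_vol (real d)"
  have V0: "V \<ge> 0" unfolding V_def by (simp add: unit_ball_vol_nonneg)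
  define Ca where "Ca = V * K^d / ln 2"
  have Ca0: "Ca \<ge> 0" unfolding Ca_def using V0 K by simp
  define C where "C = max Ca (Cb K d)"
  show ?thesis
  proof (rule exI[of _ C], intro allI impI, elim conjE)
    fix eps t \<gamma> :: real and \<xi> :: 'a
    assume e: "0 < eps" "eps \<le> 1/2" and xi: "norm \<xi> \<le> K / eps" and t: "0 < t" "t \<le> 1"
    define P where "P = (1/eps)^(d-1)"
    have P0: "P > 0" unfolding P_def using e by simp
    have pc: "eps powr (1 - real DIM('a)) = P" unfolding P_def d_def by (rule powr_conv1) (use e dim in auto)
    have l2: "ln 2 \<le> \<bar>ln eps\<bar>" by (rule ln2_le[OF e])
    let ?I = "(\<integral>\<^sup>+ x \<in> freqBall K eps.
          ennreal (1 / cmod (complex_of_real (\<gamma> + \<xi> \<bullet> x) + \<i> / complex_of_real t)) \<partial>lborel)"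
    have A: "?I \<le> ennreal (C * P * (t/eps) * \<bar>ln eps\<bar>)"
    proof -
      have "?I \<le> ennreal (t * unit_ball_vol (DIM('a)) * (K/eps)^DIM('a))"
      proof (rule partA)
        show "0 < eps" "0 < K" "0 \<le> t" using e K t by auto
        show "1 / cmod (complex_of_real (\<gamma> + \<xi> \<bullet> x) + \<i> / complex_of_real t) \<le> t" for x
          by (rule G_le_t[OF t(1)])
      qed
      also have "\<dots> \<le> ennreal (C * P * (t/eps) * \<bar>ln eps\<bar>)"
      proof (rule ennreal_leI)
        have "t * unit_ball_vol (DIM('a)) * (K/eps)^DIM('a) = Ca * P * (t/eps) * ln 2"
        proof -
          have ps: "(K/eps)^DIM('a) = K^d * P * (1/eps)" unfolding P_def d_def by (rule pow_split1) (use dim e in auto)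
          have l: "ln 2 > (0::real)" by simp
          show ?thesis unfolding ps Ca_def V_def d_def using l by (simp add: field_simps)
        qed
        also have "\<dots> \<le> C * P * (t/eps) * \<bar>ln eps\<bar>"
        proof -
          have c1: "Ca \<le> C" unfolding C_def by simp
          have c2: "0 \<le> P * (t/eps)" using P0 e t by simp
          have "(Ca * (P * (t/eps))) * ln 2 \<le> (C * (P * (t/eps))) * \<bar>ln eps\<bar>"
          proof (rule mult_mono[OF mult_right_mono[OF c1 c2] l2])
            have "0 \<le> C" using c1 Ca0 by linarith
            then show "0 \<le> C * (P * (t/eps))" using c2 by (rule mult_nonneg_nonneg)
          qed simp
          then show ?thesis by (simp add: mult.assoc)
        qed
        finally show "t * unit_ball_vol (DIM('a)) * (K/eps)^DIM('a) \<le> C * P * (t/eps) * \<bar>ln eps\<bar>" .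
      qed
      finally show ?thesis .
    qed
    show "?I \<le> ennreal (C * eps powr (1 - real DIM('a))
             * (if \<xi> = 0 then t / eps else min (1 / norm \<xi>) (t / eps)) * \<bar>ln eps\<bar>)"
    proof (cases "\<xi> = 0 \<or> t/eps \<le> 1 / norm \<xi>")
      case True
      then have "(if \<xi> = 0 then t / eps else min (1 / norm \<xi>) (t / eps)) = t/eps" by auto
      then show ?thesis unfolding pc using A by simp
    next
      case False
      then have xi0: "\<xi> \<noteq> 0" and mn: "(if \<xi> = 0 then t / eps else min (1 / norm \<xi>) (t / eps)) = 1 / norm \<xi>" by auto
      have "?I \<le> ennreal (Cb K DIM('a) * (1/eps)^(DIM('a)-1) / norm \<xi> * \<bar>ln eps\<bar>)"
        by (rule partB[OF dim K e xi0 xi t])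
      also have "\<dots> \<le> ennreal (C * P * (1 / norm \<xi>) * \<bar>ln eps\<bar>)"
      proof (rule ennreal_leI)
        have "Cb K DIM('a) * (1/eps)^(DIM('a)-1) / norm \<xi> * \<bar>ln eps\<bar> = Cb K d * (P * (1 / norm \<xi>) * \<bar>ln eps\<bar>)"
          unfolding P_def d_def by simp
        also have "\<dots> \<le> C * (P * (1 / norm \<xi>) * \<bar>ln eps\<bar>)"
          unfolding C_def using P0 by (intro mult_right_mono) auto
        finally show "Cb K DIM('a) * (1/eps)^(DIM('a)-1) / norm \<xi> * \<bar>ln eps\<bar> \<le> C * P * (1 / norm \<xi>) * \<bar>ln eps\<bar>"
          by (simp add: mult_ac)
      qed
      finally show ?thesis unfolding pc mn .
    qed
  qed
qed



lemma part_ii: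
  fixes K :: real
  assumes dim: "DIM('a::euclidean_space) \<ge> 2" and K: "K \<ge> 1"
  shows "\<forall>\<delta>::real. 0 < \<delta> \<and> \<delta> \<le> 1 \<longrightarrow>
      (\<exists>C::real. \<forall>eps (\<xi>t::'a) t \<gamma>.
        0 < eps \<and> eps \<le> 1/2 \<and> norm \<xi>t \<le> K / eps \<and> 0 < t \<and> t \<le> 1 \<longrightarrow>
        (\<integral>\<^sup>+ x \<in> freqBall K eps.
            ennreal ((if norm \<xi>t \<ge> \<delta> / eps \<or> \<bar>\<gamma> + \<xi>t \<bullet> x\<bar> \<ge> \<delta> / eps\<^sup>2 then 1 else 0)
              / cmod (complex_of_real (\<gamma> + \<xi>t \<bullet> x) + \<i> / complex_of_real t)) \<partial>lborel)
          \<le> ennreal (C * eps powr (2 - real DIM('a)) * \<bar>ln eps\<bar>))"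
proof (intro allI impI, elim conjE)
  fix \<delta> :: real assume d0: "0 < \<delta>" and d1: "\<delta> \<le> 1"
  define d where "d = DIM('a)"
  define V where "V = unit_ball_vol (real d)"
  have V0: "V \<ge> 0" unfolding V_def by (simp add: unit_ball_vol_nonneg)
  define C1 where "C1 = Cb K d / \<delta>"
  define C2 where "C2 = V * K^d / (\<delta> * ln 2)"
  have C20: "C2 \<ge> 0" unfolding C2_def using V0 K d0 by simp
  define C where "C = max C1 C2"
  show "\<exists>C::real. \<forall>eps (\<xi>t::'a) t \<gamma>.
        0 < eps \<and> eps \<le> 1/2 \<and> norm \<xi>t \<le> K / eps \<and> 0 < t \<and> t \<le> 1 \<longrightarrow>
        (\<integral>\<^sup>+ x \<in> freqBall K eps.
            ennreal ((if norm \<xi>t \<ge> \<delta> / eps \<or> \<bar>\<gamma> + \<xi>t \<bullet> x\<bar> \<ge> \<delta> / eps\<^sup>2 then 1 else 0)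
              / cmod (complex_of_real (\<gamma> + \<xi>t \<bullet> x) + \<i> / complex_of_real t)) \<partial>lborel)
          \<le> ennreal (C * eps powr (2 - real DIM('a)) * \<bar>ln eps\<bar>)"
  proof (rule exI[of _ C], intro allI impI, elim conjE)
    fix eps t \<gamma> :: real and \<xi> :: 'a
    assume e: "0 < eps" "eps \<le> 1/2" and xi: "norm \<xi> \<le> K / eps" and t: "0 < t" "t \<le> 1"
    define Q where "Q = (1/eps)^(d-2)"
    have Q0: "Q > 0" unfolding Q_def using e by simp
    have pc: "eps powr (2 - real DIM('a)) = Q" unfolding Q_def d_def by (rule powr_conv2) (use e dim in auto)
    have l2: "ln 2 \<le> \<bar>ln eps\<bar>" by (rule ln2_le[OF e])
    have lpos: "0 < \<bar>ln eps\<bar>" using l2 ln_gt_zero[of 2] by linarith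
    let ?I = "(\<integral>\<^sup>+ x \<in> freqBall K eps.
            ennreal ((if norm \<xi> \<ge> \<delta> / eps \<or> \<bar>\<gamma> + \<xi> \<bullet> x\<bar> \<ge> \<delta> / eps\<^sup>2 then 1 else 0)
              / cmod (complex_of_real (\<gamma> + \<xi> \<bullet> x) + \<i> / complex_of_real t)) \<partial>lborel)"
    show "?I \<le> ennreal (C * eps powr (2 - real DIM('a)) * \<bar>ln eps\<bar>)"
    proof (cases "norm \<xi> \<ge> \<delta> / eps")
      case True
      have xi0: "\<xi> \<noteq> 0" using True d0 e by (auto simp: field_simps)
      have nx: "norm \<xi> > 0" using xi0 by simp
      have "?I \<le> (\<integral>\<^sup>+ x \<in> freqBall K eps.
          ennreal (1 / cmod (complex_of_real (\<gamma> + \<xi> \<bullet> x) + \<i> / complex_of_real t)) \<partial>lborel)"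
        by (intro nn_integral_mono mult_right_mono ennreal_leI divide_right_mono) auto
      also have "\<dots> \<le> ennreal (Cb K DIM('a) * (1/eps)^(DIM('a)-1) / norm \<xi> * \<bar>ln eps\<bar>)"
        by (rule partB[OF dim K e xi0 xi t])
      also have "\<dots> \<le> ennreal (C * eps powr (2 - real DIM('a)) * \<bar>ln eps\<bar>)"
      proof (rule ennreal_leI)
        have CbK: "Cb K d \<ge> 0" unfolding Cb_def using K by (simp add: Lc_nonneg)
        have "1 / norm \<xi> \<le> eps / \<delta>" using True d0 e nx by (simp add: field_simps)
        then have "Cb K d * (1/eps)^(d-1) * (1 / norm \<xi>) \<le> Cb K d * (1/eps)^(d-1) * (eps / \<delta>)"
          using CbK e by (intro mult_left_mono) auto
        also have "\<dots> = C1 * ((1/eps)^(d-1) * eps)" unfolding C1_def by simp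
        also have "\<dots> = C1 * Q" unfolding Q_def using pow_split2[of d eps] dim e d_def by simp
        also have "\<dots> \<le> C * Q" unfolding C_def using Q0 by (intro mult_right_mono) auto
        finally have "Cb K d * (1/eps)^(d-1) * (1 / norm \<xi>) \<le> C * Q" .
        then have "Cb K d * (1/eps)^(d-1) * (1 / norm \<xi>) * \<bar>ln eps\<bar> \<le> C * Q * \<bar>ln eps\<bar>"
          using lpos by (intro mult_right_mono) auto
        then show "Cb K DIM('a) * (1/eps)^(DIM('a)-1) / norm \<xi> * \<bar>ln eps\<bar> \<le> C * eps powr (2 - real DIM('a)) * \<bar>ln eps\<bar>"
          unfolding pc d_def by simp
      qed
      finally show ?thesis .
    next
      case False
      have "?I \<le> ennreal ((eps^2/\<delta>) * unit_ball_vol (DIM('a)) * (K/eps)^DIM('a))"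
      proof (rule partA)
        show "0 < eps" "0 < K" "0 \<le> eps^2/\<delta>" using e K d0 by auto
        fix x
        show "(if norm \<xi> \<ge> \<delta> / eps \<or> \<bar>\<gamma> + \<xi> \<bullet> x\<bar> \<ge> \<delta> / eps\<^sup>2 then 1 else 0)
              / cmod (complex_of_real (\<gamma> + \<xi> \<bullet> x) + \<i> / complex_of_real t) \<le> eps^2/\<delta>"
        proof (cases "\<bar>\<gamma> + \<xi> \<bullet> x\<bar> \<ge> \<delta> / eps\<^sup>2")
          case True2: True
          have Ap: "\<bar>\<gamma> + \<xi> \<bullet> x\<bar> > 0" using True2 d0 e
          proof -
            have "\<delta> / eps\<^sup>2 > 0" using d0 e by simp
            then show ?thesis using True2 by linarith
          qed
          have "1 / cmod (complex_of_real (\<gamma> + \<xi> \<bullet> x) + \<i> / complex_of_real t) \<le> 1 / \<bar>\<gamma> + \<xi> \<bullet> x\<bar>"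
            by (rule G_le_abs[OF t(1)]) (use Ap in auto)
          also have "\<dots> \<le> 1 / (\<delta> / eps\<^sup>2)"
            by (rule divide_left_mono[OF True2]) (use d0 e Ap in auto)
          also have "\<dots> = eps^2/\<delta>" by simp
          finally show ?thesis using True2 by simp
        next
          case False2: False
          then show ?thesis using False d0 by simp
        qed
      qed
      also have "\<dots> \<le> ennreal (C * eps powr (2 - real DIM('a)) * \<bar>ln eps\<bar>)"
      proof (rule ennreal_leI)
        have ps: "(K/eps)^DIM('a) = K^d * (1/eps)^(d-1) * (1/eps)" unfolding d_def by (rule pow_split1) (use dim e in auto)
        have q2: "(1/eps)^(d-1) * eps = Q" unfolding Q_def by (rule pow_split2) (use dim e d_def in auto)
        have "(eps^2/\<delta>) * unit_ball_vol (DIM('a)) * (K/eps)^DIM('a) = (V * K^d / \<delta>) * ((1/eps)^(d-1) * eps)"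
          unfolding ps V_def d_def using e by (simp add: power2_eq_square field_simps)
        also have "\<dots> = C2 * ln 2 * Q" unfolding q2 C2_def by simp
        also have "\<dots> \<le> C * Q * \<bar>ln eps\<bar>"
        proof -
          have c1: "C2 * Q \<le> C * Q" unfolding C_def using Q0 by (intro mult_right_mono) auto
          have "(C2 * Q) * ln 2 \<le> (C * Q) * \<bar>ln eps\<bar>"
          proof (rule mult_mono[OF c1 l2])
            have "0 \<le> C" unfolding C_def using C20 by simp
            then show "0 \<le> C * Q" using Q0 by simp
          qed simp
          then show ?thesis by (simp add: mult_ac)
        qed
        finally show "(eps^2/\<delta>) * unit_ball_vol (DIM('a)) * (K/eps)^DIM('a) \<le> C * eps powr (2 - real DIM('a)) * \<bar>ln eps\<bar>"
          unfolding pc .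
      qed
      finally show ?thesis .
    qed
  qed
qed



lemma part_iii:
  fixes K :: real
  assumes dim: "DIM('a::euclidean_space) \<ge> 2" and K: "K \<ge> 1"
  shows "\<forall>m::real \<Rightarrow> real. C1_nonneg_vanishing m \<longrightarrow>
      (\<exists>C::real. \<forall>eps (\<xi>t::'a) t \<gamma>.
        0 < eps \<and> eps \<le> 1/2 \<and> norm \<xi>t \<le> K / eps \<and> 0 < t \<and> t \<le> 1 \<longrightarrow>
        (\<integral>\<^sup>+ x \<in> freqBall K eps.
            ennreal (m (eps * norm \<xi>t)
              / cmod (complex_of_real (\<gamma> + \<xi>t \<bullet> x) + \<i> / complex_of_real t)) \<partial>lborel)
          \<le> ennreal (C * eps powr (2 - real DIM('a)) * \<bar>ln eps\<bar>))"
proof (intro allI impI)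
  fix m :: "real \<Rightarrow> real" assume m: "C1_nonneg_vanishing m"
  have mnn: "\<And>x. x \<ge> 0 \<Longrightarrow> m x \<ge> 0" and m0: "m 0 = 0" using m unfolding C1_nonneg_vanishing_def by auto
  obtain L where L0: "L \<ge> 0" and Lb: "\<And>s. 0 \<le> s \<Longrightarrow> s \<le> K \<Longrightarrow> m s \<le> L * s"
    using m_lip[OF m, of K] K by auto
  define d where "d = DIM('a)"
  define C where "C = L * Cb K d"
  show "\<exists>C::real. \<forall>eps (\<xi>t::'a) t \<gamma>.
        0 < eps \<and> eps \<le> 1/2 \<and> norm \<xi>t \<le> K / eps \<and> 0 < t \<and> t \<le> 1 \<longrightarrow>
        (\<integral>\<^sup>+ x \<in> freqBall K eps.
            ennreal (m (eps * norm \<xi>t)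
              / cmod (complex_of_real (\<gamma> + \<xi>t \<bullet> x) + \<i> / complex_of_real t)) \<partial>lborel)
          \<le> ennreal (C * eps powr (2 - real DIM('a)) * \<bar>ln eps\<bar>)"
  proof (rule exI[of _ C], intro allI impI, elim conjE)
    fix eps t \<gamma> :: real and \<xi> :: 'a
    assume e: "0 < eps" "eps \<le> 1/2" and xi: "norm \<xi> \<le> K / eps" and t: "0 < t" "t \<le> 1"
    define Q where "Q = (1/eps)^(d-2)"
    have pc: "eps powr (2 - real DIM('a)) = Q" unfolding Q_def d_def by (rule powr_conv2) (use e dim in auto)
    let ?I = "(\<integral>\<^sup>+ x \<in> freqBall K eps.
            ennreal (m (eps * norm \<xi>)
              / cmod (complex_of_real (\<gamma> + \<xi> \<bullet> x) + \<i> / complex_of_real t)) \<partial>lborel)"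
    show "?I \<le> ennreal (C * eps powr (2 - real DIM('a)) * \<bar>ln eps\<bar>)"
    proof (cases "\<xi> = 0")
      case True
      then have "?I = 0" using m0 by simp
      then show ?thesis by simp
    next
      case False
      have nx: "norm \<xi> > 0" using False by simp
      define a where "a = m (eps * norm \<xi>)"
      have s0: "0 \<le> eps * norm \<xi>" using e by simp
      have sK: "eps * norm \<xi> \<le> K" using xi e by (simp add: field_simps)
      have a0: "a \<ge> 0" unfolding a_def by (rule mnn[OF s0])
      have aL: "a \<le> L * (eps * norm \<xi>)" unfolding a_def by (rule Lb[OF s0 sK])
      have "?I = (\<integral>\<^sup>+ x. ennreal a * (ennreal (1 / cmod (complex_of_real (\<gamma> + \<xi> \<bullet> x) + \<i> / complex_of_real t)) * indicator (freqBall K eps) x) \<partial>lborel)"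
      proof -
        have gen: "ennreal (a / c) = ennreal a * ennreal (1/c)" for c :: real
          using ennreal_mult'[OF a0, of "1/c"] by simp
        show ?thesis unfolding a_def[symmetric] by (intro nn_integral_cong) (simp only: gen mult.assoc)
      qed
      also have "\<dots> = ennreal a * (\<integral>\<^sup>+ x \<in> freqBall K eps. ennreal (1 / cmod (complex_of_real (\<gamma> + \<xi> \<bullet> x) + \<i> / complex_of_real t)) \<partial>lborel)"
      proof -
        have cm[measurable]: "cball (0::'a) (K/eps) \<in> sets borel" by (rule borel_closed) simp
        show ?thesis unfolding freqBall_def by (rule nn_integral_cmult) measurable
      qed
      also have "\<dots> \<le> ennreal a * ennreal (Cb K DIM('a) * (1/eps)^(DIM('a)-1) / norm \<xi> * \<bar>ln eps\<bar>)"
        by (rule mult_left_mono[OF partB[OF dim K e False xi t]]) simp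
      also have "\<dots> = ennreal (a * (Cb K d * (1/eps)^(d-1) / norm \<xi> * \<bar>ln eps\<bar>))"
        using ennreal_mult'[OF a0, of "Cb K d * (1/eps)^(d-1) / norm \<xi> * \<bar>ln eps\<bar>"] unfolding d_def by simp
      also have "\<dots> \<le> ennreal (C * eps powr (2 - real DIM('a)) * \<bar>ln eps\<bar>)"
      proof (rule ennreal_leI)
        have CbK: "Cb K d \<ge> 0" unfolding Cb_def using K by (simp add: Lc_nonneg)
        have X: "0 \<le> Cb K d * (1/eps)^(d-1) / norm \<xi> * \<bar>ln eps\<bar>"
          by (intro mult_nonneg_nonneg divide_nonneg_nonneg) (use CbK e in auto)
        have "a * (Cb K d * (1/eps)^(d-1) / norm \<xi> * \<bar>ln eps\<bar>) \<le> (L * (eps * norm \<xi>)) * (Cb K d * (1/eps)^(d-1) / norm \<xi> * \<bar>ln eps\<bar>)"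
          by (rule mult_right_mono[OF aL X])
        also have "\<dots> = L * Cb K d * ((1/eps)^(d-1) * eps) * \<bar>ln eps\<bar>" using nx by (simp add: field_simps)
        also have "(1/eps)^(d-1) * eps = Q" unfolding Q_def by (rule pow_split2) (use dim e d_def in auto)
        finally show "a * (Cb K d * (1/eps)^(d-1) / norm \<xi> * \<bar>ln eps\<bar>) \<le> C * eps powr (2 - real DIM('a)) * \<bar>ln eps\<bar>"
          unfolding pc C_def by simp
      qed
      finally show ?thesis .
    qed
  qed
qed

lemma part_iv:
  fixes K :: real
  assumes dim: "DIM('a::euclidean_space) \<ge> 2" and K: "K \<ge> 1"
  shows "\<exists>C::real. \<forall>eps (\<xi>t::'a) t \<gamma>.
      0 < eps \<and> eps \<le> 1/2 \<and> norm \<xi>t \<le> K / eps \<and> 0 < t \<and> t \<le> 1 \<longrightarrow>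
      (\<integral>\<^sup>+ x \<in> freqBall K eps.
          ennreal (1 / cmod (complex_of_real (\<gamma> + (\<xi>t + x) \<bullet> x) + \<i> / complex_of_real t)) \<partial>lborel)
        \<le> ennreal (C * eps powr (2 - real DIM('a)) * \<bar>ln eps\<bar>)"
proof (rule exI[of _ "C4 K DIM('a)"], intro allI impI, elim conjE)
  fix eps t \<gamma> :: real and \<xi> :: 'a
  assume e: "0 < eps" "eps \<le> 1/2" and xi: "norm \<xi> \<le> K / eps" and t: "0 < t" "t \<le> 1"
  have pc: "eps powr (2 - real DIM('a)) = (1/eps)^(DIM('a)-2)" by (rule powr_conv2) (use e dim in auto)
  show "(\<integral>\<^sup>+ x \<in> freqBall K eps.
          ennreal (1 / cmod (complex_of_real (\<gamma> + (\<xi> + x) \<bullet> x) + \<i> / complex_of_real t)) \<partial>lborel)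
        \<le> ennreal (C4 K DIM('a) * eps powr (2 - real DIM('a)) * \<bar>ln eps\<bar>)"
    unfolding pc by (rule partQ[OF dim K e xi t])
qed


theorem lemmaB1:
  fixes K :: real
  assumes dim: "DIM('a::euclidean_space) \<ge> 2" and K: "K \<ge> 1"
  shows
  "(\<exists>C::real. \<forall>eps (\<xi>t::'a) t \<gamma>.
      0 < eps \<and> eps \<le> 1/2 \<and> norm \<xi>t \<le> K / eps \<and> 0 < t \<and> t \<le> 1 \<longrightarrow>
      (\<integral>\<^sup>+ x \<in> freqBall K eps.
          ennreal (1 / cmod (complex_of_real (\<gamma> + \<xi>t \<bullet> x) + \<i> / complex_of_real t)) \<partial>lborel)
        \<le> ennreal (C * eps powr (1 - real DIM('a))
             * (if \<xi>t = 0 then t / eps else min (1 / norm \<xi>t) (t / eps)) * \<bar>ln eps\<bar>))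
   \<and> (\<forall>\<delta>::real. 0 < \<delta> \<and> \<delta> \<le> 1 \<longrightarrow>
      (\<exists>C::real. \<forall>eps (\<xi>t::'a) t \<gamma>.
        0 < eps \<and> eps \<le> 1/2 \<and> norm \<xi>t \<le> K / eps \<and> 0 < t \<and> t \<le> 1 \<longrightarrow>
        (\<integral>\<^sup>+ x \<in> freqBall K eps.
            ennreal ((if norm \<xi>t \<ge> \<delta> / eps \<or> \<bar>\<gamma> + \<xi>t \<bullet> x\<bar> \<ge> \<delta> / eps\<^sup>2 then 1 else 0)
              / cmod (complex_of_real (\<gamma> + \<xi>t \<bullet> x) + \<i> / complex_of_real t)) \<partial>lborel)
          \<le> ennreal (C * eps powr (2 - real DIM('a)) * \<bar>ln eps\<bar>)))
   \<and> (\<forall>m::real \<Rightarrow> real. C1_nonneg_vanishing m \<longrightarrow>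
      (\<exists>C::real. \<forall>eps (\<xi>t::'a) t \<gamma>.
        0 < eps \<and> eps \<le> 1/2 \<and> norm \<xi>t \<le> K / eps \<and> 0 < t \<and> t \<le> 1 \<longrightarrow>
        (\<integral>\<^sup>+ x \<in> freqBall K eps.
            ennreal (m (eps * norm \<xi>t)
              / cmod (complex_of_real (\<gamma> + \<xi>t \<bullet> x) + \<i> / complex_of_real t)) \<partial>lborel)
          \<le> ennreal (C * eps powr (2 - real DIM('a)) * \<bar>ln eps\<bar>)))
   \<and> (\<exists>C::real. \<forall>eps (\<xi>t::'a) t \<gamma>.
      0 < eps \<and> eps \<le> 1/2 \<and> norm \<xi>t \<le> K / eps \<and> 0 < t \<and> t \<le> 1 \<longrightarrow>
      (\<integral>\<^sup>+ x \<in> freqBall K eps.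
          ennreal (1 / cmod (complex_of_real (\<gamma> + (\<xi>t + x) \<bullet> x) + \<i> / complex_of_real t)) \<partial>lborel)
        \<le> ennreal (C * eps powr (2 - real DIM('a)) * \<bar>ln eps\<bar>))"
    by (intro conjI part_i[OF dim K] part_ii[OF dim K] part_iii[OF dim K] part_iv[OF dim K])

end
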